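(* Let $T_t$ be the special flow over the dyadic odometer on $M=[0,1)^2$. Let $(p_n)$ be natural numbers with $p_{n+1}\ge p_n+2$, let $d_n\in(0,1/2)$, $a_n>0$, and assume $$\sum_{m=n+1}^\infty a_m=o(a_nd_n)\quad (n\to\infty),\qquad 2^{p_n-2}<d_m2^{p_m-1}\ \text{ for all } m>n .$$ Put $L_n=d_n2^{p_n-1}$ and define $f_n:[0,2^{-p_n})\times[0,2^{p_n})\to\mathbb{R}$ by $f_n(u,v)=a_n$ if $0\le v<L_n$, $f_n(u,v)=-a_n$ if $2^{p_n-1}\le v<2^{p_n-1}+L_n$, and $f_n(u,v)=0$ otherwise. Let $f(x,y)=\sum_{n=1}^\infty f_n(\Phi_{p_n}^{-1}(x,y))$ and $t_n=2^{p_n-2}$. Then $f\in L_1(M)$ has zero mean and $$\sup_{(x,y)\in M}|A(f,t_n,(x,y))|=\mathcal{O}(a_nd_n)\quad (n\to\infty).$$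
   Context: Dyadic odometer: $S:[0,1)\to[0,1)$ defined on $x=\sum_{i\ge1}x_i2^{-i}$ (binary expansion, not eventually all $1$) by: if $x_1=\dots=x_m=1$ and $x_{m+1}=0$ ($m\ge0$), then $S$ replaces these first $m+1$ digits by $0,\dots,0,1$, other digits unchanged. The special flow over $S$ with constant return time $1$ is the flow on $M=[0,1)^2$ given by $T_t(x,y)=(S^{\lfloor y+t\rfloor}x,\ y+t-\lfloor y+t\rfloor)$, $t\ge0$, preserving Lebesgue measure $m$. For $p\in\mathbb{N}$, $\Phi_p:[0,2^{-p})\times[0,2^p)\to M$, $\Phi_p(u,v)=T_v(u,0)$, is a measure-preserving bijection (mod 0). Birkhoff average: $A(f,t,z)=\frac1t\int_0^t f(T_sz)\,ds$. *)

theory Defs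
  imports "HOL-Analysis.Analysis" "HOL-Library.Landau_Symbols"
begin

text \<open>i-th binary digit (i \<ge> 1) of x in [0,1); this is the expansion not eventually all 1.\<close>
definition bdigit :: "nat \<Rightarrow> real \<Rightarrow> int" where
  "bdigit i x = \<lfloor>2 ^ i * x\<rfloor> mod 2"

text \<open>Dyadic odometer: if x_1 = ... = x_m = 1 and x_(m+1) = 0, the first m+1 digits
  1,...,1,0 are replaced by 0,...,0,1, other digits unchanged.\<close>
definition odo :: "real \<Rightarrow> real" where
  "odo x = (let m = (LEAST m. bdigit (Suc m) x = 0)
            in x - (\<Sum>i\<in>{1..m}. (1/2) ^ i) + (1/2) ^ (Suc m))"

definition Mset :: "(real \<times> real) set" where
  "Mset = {0..<1} \<times> {0..<1}"

text \<open>Special flow over the odometer with constant roof 1 (for t \<ge> 0).\<close>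
definition flow :: "real \<Rightarrow> real \<times> real \<Rightarrow> real \<times> real" where
  "flow t z = ((odo ^^ nat \<lfloor>snd z + t\<rfloor>) (fst z), frac (snd z + t))"

definition Phi_dom :: "nat \<Rightarrow> (real \<times> real) set" where
  "Phi_dom p = {0..<(1/2) ^ p} \<times> {0..<2 ^ p}"

definition Phi :: "nat \<Rightarrow> real \<times> real \<Rightarrow> real \<times> real" where
  "Phi p uv = flow (snd uv) (fst uv, 0)"

definition Phi_inv :: "nat \<Rightarrow> real \<times> real \<Rightarrow> real \<times> real" where
  "Phi_inv p = inv_into (Phi_dom p) (Phi p)"

definition birk :: "(real \<times> real \<Rightarrow> real) \<Rightarrow> real \<Rightarrow> real \<times> real \<Rightarrow> real" where
  "birk f t z = (1 / t) * (LBINT s=0..t. f (flow s z))"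

definition fpiece :: "real \<Rightarrow> real \<Rightarrow> nat \<Rightarrow> real \<times> real \<Rightarrow> real" where
  "fpiece a d p uv =
     (let v = snd uv; L = d * 2 powr (real p - 1); H = 2 powr (real p - 1) in
      if 0 \<le> v \<and> v < L then a
      else if H \<le> v \<and> v < H + L then - a
      else 0)"

definition ffun :: "(nat \<Rightarrow> real) \<Rightarrow> (nat \<Rightarrow> real) \<Rightarrow> (nat \<Rightarrow> nat) \<Rightarrow> real \<times> real \<Rightarrow> real" where
  "ffun a d p z = (\<Sum>n. fpiece (a n) (d n) (p n) (Phi_inv (p n) z))"

end

theory Submission
  imports Defs
begin

fun K :: "nat \<Rightarrow> real \<Rightarrow> nat" where
  "K 0 x = 0"
| "K (Suc p) x = (if x < 1/2 then 2 * K p (2*x) else 1 + 2 * K p (2*x - 1))"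

fun Dt :: "nat \<Rightarrow> real \<Rightarrow> real" where
  "Dt 0 x = x"
| "Dt (Suc p) x = (if x < 1/2 then Dt p (2*x) else Dt p (2*x - 1))"

lemma K_bound: "K p x < 2 ^ p"
proof (induction p arbitrary: x)
  case 0 then show ?case by simp
next
  case (Suc p)
  have "K p (2*x) < 2^p" "K p (2*x-1) < 2^p" using Suc by auto
  then show ?case by auto
qed

lemma bdigit_1_lo: "0 \<le> x \<Longrightarrow> x < 1/2 \<Longrightarrow> bdigit 1 x = 0"
  unfolding bdigit_def by (simp add: floor_eq_iff)

lemma bdigit_1_hi: "1/2 \<le> x \<Longrightarrow> x < 1 \<Longrightarrow> bdigit 1 x = 1"
proof -
  assume "1/2 \<le> x" "x < 1"
  then have "\<lfloor>2 * x\<rfloor> = 1" by (simp add: floor_eq_iff)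
  then show ?thesis unfolding bdigit_def by simp
qed

lemma bdigit_shift:
  assumes "1/2 \<le> x"
  shows "bdigit (Suc (Suc i)) x = bdigit (Suc i) (2*x - 1)"
proof -
  have "(2::real) ^ Suc (Suc i) * x = 2 ^ Suc i * (2*x - 1) + of_int (2 ^ Suc i)"
    by (simp add: algebra_simps)
  then have "\<lfloor>(2::real) ^ Suc (Suc i) * x\<rfloor> = \<lfloor>2 ^ Suc i * (2*x - 1)\<rfloor> + 2 ^ Suc i"
    by (metis floor_add_int)
  then show ?thesis unfolding bdigit_def by simp
qed

lemma odd_between: "2*(b::int) \<le> a \<Longrightarrow> a \<le> 2*b+1 \<Longrightarrow> odd a \<Longrightarrow> a = 2*b+1"
proof -
  assume "2*b \<le> a" "a \<le> 2*b+1" "odd a"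
  then have "a = 2*b \<or> a = 2*b+1" by linarith
  then show ?thesis using \<open>odd a\<close> by auto
qed

lemma digit_exists:
  assumes "0 \<le> x" "x < 1"
  shows "\<exists>m. bdigit (Suc m) x = 0"
proof (rule ccontr)
  assume "\<not> ?thesis"
  then have odd: "\<And>m. odd \<lfloor>2 ^ Suc m * x\<rfloor>" unfolding bdigit_def
    by (metis even_iff_mod_2_eq_zero)
  have fl: "\<lfloor>2 ^ i * x\<rfloor> = 2 ^ i - 1" if "i \<ge> 1" for i
    using that
  proof (induction i rule: dec_induct)
    case base
    have "\<lfloor>2 * x\<rfloor> \<le> 1" using assms by linarith
    moreover have "\<lfloor>2 * x\<rfloor> \<ge> 0" using assms by simp
    moreover have "odd \<lfloor>2 * x\<rfloor>" using odd[of 0] by simp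
    ultimately have "\<lfloor>2 * x\<rfloor> = 1" by (metis antisym_conv2 even_zero int_one_le_iff_zero_less linorder_not_less)
    then show ?case by simp
  next
    case (step i)
    have "\<lfloor>(2::real) ^ Suc i * x\<rfloor> \<ge> 2 * \<lfloor>2 ^ i * x\<rfloor>"
    proof -
      have "2 * of_int \<lfloor>2 ^ i * x\<rfloor> \<le> (2::real) ^ Suc i * x" 
        using of_int_floor_le[of "2^i*x"] by simp
      then show ?thesis by (metis floor_mono floor_of_int of_int_mult of_int_numeral)
    qed
    moreover have "\<lfloor>(2::real) ^ Suc i * x\<rfloor> \<le> 2 * \<lfloor>2 ^ i * x\<rfloor> + 1"
    proof -
      have "(2::real) ^ Suc i * x < 2 * (of_int \<lfloor>2 ^ i * x\<rfloor> + 1)" 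
        using floor_correct[of "(2::real)^i*x"] by (simp add: mult.assoc) linarith
      then have "\<lfloor>(2::real) ^ Suc i * x\<rfloor> < 2 * \<lfloor>2 ^ i * x\<rfloor> + 2" by (simp add: floor_less_iff)
      then show ?thesis by linarith
    qed
    moreover have "odd \<lfloor>(2::real) ^ Suc i * x\<rfloor>" using odd[of i] by simp
    ultimately have "\<lfloor>(2::real) ^ Suc i * x\<rfloor> = 2 * \<lfloor>2 ^ i * x\<rfloor> + 1"
      using odd_between by blast
    with step show ?case by simp
  qed
  have "x \<ge> 1 - (1/2)^i" if "i \<ge> 1" for i
  proof -
    have "(2::real)^i - 1 \<le> 2^i * x" using fl[OF that] of_int_floor_le[of "2^i*x"] by simp
    then have "((2::real)^i - 1) * (1/2)^i \<le> x" 
      by (simp add: field_simps power_divide)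
    moreover have "((2::real)^i - 1) * (1/2)^i = 1 - (1/2)^i" by (simp add: field_simps power_divide)
    ultimately show ?thesis by simp
  qed
  note lb = this
  obtain i where i: "(1/2::real)^i < 1 - x" using assms real_arch_pow_inv[of "1-x" "1/2"] by auto
  have "(1/2::real)^(Suc i) \<le> (1/2)^i" by (simp add: power_le_one)
  moreover have "x \<ge> 1 - (1/2)^(Suc i)" using lb[of "Suc i"] by simp
  ultimately show False using i by linarith
qed


lemma geom_half: "(\<Sum>i\<in>{1..m}. (1/2::real) ^ i) = 1 - (1/2)^m"
  by (induction m) (auto simp: sum.cl_ivl_Suc)

definition lst :: "real \<Rightarrow> nat" where
  "lst x = (LEAST m. bdigit (Suc m) x = 0)"

lemma odo_closed: "odo x = x - 1 + 3/2 * (1/2)^(lst x)"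
  unfolding odo_def lst_def Let_def geom_half by simp

lemma lst_lo: "0 \<le> x \<Longrightarrow> x < 1/2 \<Longrightarrow> lst x = 0"
  unfolding lst_def using bdigit_1_lo by (intro Least_eq_0) simp

lemma lst_hi:
  assumes "1/2 \<le> x" "x < 1"
  shows "lst x = Suc (lst (2*x - 1))"
proof -
  obtain n where n: "bdigit (Suc n) x = 0" using digit_exists[of x] assms by auto
  have "lst x = Suc (LEAST m. bdigit (Suc (Suc m)) x = 0)"
    unfolding lst_def using bdigit_1_hi[OF assms] n by (intro Least_Suc) auto
  also have "(LEAST m. bdigit (Suc (Suc m)) x = 0) = lst (2*x-1)"
    unfolding lst_def bdigit_shift[OF assms(1)] ..
  finally show ?thesis .
qed

lemma odo_lo: "0 \<le> x \<Longrightarrow> x < 1/2 \<Longrightarrow> odo x = x + 1/2"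
  using lst_lo odo_closed by simp

lemma odo_hi: "1/2 \<le> x \<Longrightarrow> x < 1 \<Longrightarrow> odo x = odo (2*x - 1) / 2"
  using lst_hi[of x] odo_closed[of x] odo_closed[of "2*x-1"] by simp

lemma odo_range_aux: "lst x = m \<Longrightarrow> 0 \<le> x \<Longrightarrow> x < 1 \<Longrightarrow> 0 \<le> odo x \<and> odo x < 1"
proof (induction m arbitrary: x)
  case 0
  have "x < 1/2"
  proof (rule ccontr)
    assume "\<not> x < 1/2"
    then have "lst x = Suc (lst (2*x-1))" using lst_hi 0 by simp
    with 0 show False by simp
  qed
  then show ?case using odo_lo 0 by simp
next
  case (Suc m)
  have h: "1/2 \<le> x" using lst_lo Suc.prems by fastforce
  then have "lst (2*x-1) = m" using lst_hi Suc.prems by simp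
  then have "0 \<le> odo (2*x-1) \<and> odo (2*x-1) < 1" using Suc h by simp
  moreover have "odo x = odo (2*x-1)/2" using odo_hi h Suc.prems by simp
  ultimately show ?case by simp
qed

lemma odo_range: "0 \<le> x \<Longrightarrow> x < 1 \<Longrightarrow> 0 \<le> odo x \<and> odo x < 1"
  using odo_range_aux by blast

lemma K_odo:
  "0 \<le> x \<Longrightarrow> x < 1 \<Longrightarrow> K p (odo x) = (K p x + 1) mod 2^p
     \<and> (K p x + 1 < 2^p \<longrightarrow> Dt p (odo x) = Dt p x)"
proof (induction p arbitrary: x)
  case 0 then show ?case by simp
next
  case (Suc p)
  show ?case
  proof (cases "x < 1/2")
    case True
    then have o: "odo x = x + 1/2" using odo_lo Suc.prems by simp
    have e: "2 * (x + 1/2) - 1 = 2 * x" by simp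
    have "K p (2*x) < 2^p" by (rule K_bound)
    then have "(2 * K p (2*x) + 1) mod 2^Suc p = 2 * K p (2*x) + 1" by simp
    have nl: "\<not> (x + 1/2 < 1/2)" using Suc.prems by simp
    have "K (Suc p) (odo x) = 1 + 2 * K p (2*x)" using o nl e by simp
    moreover have "K (Suc p) x = 2 * K p (2*x)" using True by simp
    moreover have "Dt (Suc p) (odo x) = Dt p (2*x)" using o nl e by simp
    moreover have "Dt (Suc p) x = Dt p (2*x)" using True by simp
    ultimately show ?thesis using \<open>(2 * K p (2*x) + 1) mod 2^Suc p = 2 * K p (2*x) + 1\<close> by simp
  next
    case False
    let ?y = "2*x - 1"
    have y: "0 \<le> ?y" "?y < 1" using False Suc.prems by auto
    have o: "odo x = odo ?y / 2" using odo_hi False Suc.prems by simp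
    have r: "0 \<le> odo ?y" "odo ?y < 1" using odo_range y by auto
    have IH: "K p (odo ?y) = (K p ?y + 1) mod 2^p"
        "K p ?y + 1 < 2^p \<longrightarrow> Dt p (odo ?y) = Dt p ?y" using Suc.IH[OF y] by auto
    have lo: "odo x < 1/2" using o r by simp
    have o2: "2 * odo x = odo ?y" using o by simp
    have "K (Suc p) (odo x) = 2 * K p (odo ?y)" using lo o2 by simp
    also have "\<dots> = (2 * (K p ?y + 1)) mod (2 * 2^p)" using IH by (simp add: mult_mod_right)
    also have "\<dots> = (K (Suc p) x + 1) mod 2^Suc p" using False by simp
    finally have A: "K (Suc p) (odo x) = (K (Suc p) x + 1) mod 2^Suc p" .
    have B: "Dt (Suc p) (odo x) = Dt (Suc p) x" if "K (Suc p) x + 1 < 2^Suc p"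
    proof -
      have "K p ?y + 1 < 2^p" using that False by simp
      then show ?thesis using IH lo o2 False by simp
    qed
    show ?thesis using A B by blast
  qed
qed

lemma K_odo_iter:
  "0 \<le> x \<Longrightarrow> x < 1 \<Longrightarrow> 0 \<le> (odo^^k) x \<and> (odo^^k) x < 1 \<and>
     K p ((odo^^k) x) = (K p x + k) mod 2^p"
proof (induction k)
  case 0 then show ?case by (simp add: K_bound)
next
  case (Suc k)
  then have h: "0 \<le> (odo^^k) x" "(odo^^k) x < 1" "K p ((odo^^k) x) = (K p x + k) mod 2^p" by auto
  have "K p ((odo^^Suc k) x) = ((K p x + k) mod 2^p + 1) mod 2^p"
    using K_odo[OF h(1,2)] h(3) by simp
  also have "\<dots> = (K p x + Suc k) mod 2^p" by (simp add: mod_Suc_eq)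
  finally show ?case using odo_range[OF h(1,2)] by simp
qed

lemma Dt_odo_iter:
  "0 \<le> x \<Longrightarrow> x < 1 \<Longrightarrow> K p x + k < 2^p \<Longrightarrow> Dt p ((odo^^k) x) = Dt p x"
proof (induction k)
  case 0 then show ?case by simp
next
  case (Suc k)
  have h: "0 \<le> (odo^^k) x" "(odo^^k) x < 1" "K p ((odo^^k) x) = (K p x + k) mod 2^p"
    using K_odo_iter Suc.prems by auto
  have "K p ((odo^^k) x) = K p x + k" using h(3) Suc.prems by simp
  then have "Dt p ((odo^^Suc k) x) = Dt p ((odo^^k) x)" using K_odo[OF h(1,2)] Suc.prems by simp
  then show ?case using Suc by simp
qed


lemma K_small: "0 \<le> u \<Longrightarrow> u < (1/2)^p \<Longrightarrow> K p u = 0"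
proof (induction p arbitrary: u)
  case 0 then show ?case by simp
next
  case (Suc p)
  have "(1/2::real)^p \<le> 1" by (simp add: power_le_one)
  moreover have "(1/2::real)^Suc p = 1/2 * (1/2)^p" by simp
  ultimately have "u < 1/2" using Suc.prems by linarith
  moreover have "K p (2*u) = 0" using Suc.IH[of "2*u"] Suc.prems by simp
  ultimately show ?case by simp
qed

lemma Dt_small: "0 \<le> t \<Longrightarrow> t < 1 \<Longrightarrow> Dt p (t*(1/2)^p) = t"
proof (induction p)
  case 0 then show ?case by simp
next
  case (Suc p)
  have "(1/2::real)^p \<le> 1" by (simp add: power_le_one)
  then have "t * (1/2)^p \<le> t" using Suc.prems mult_left_le by blast
  moreover have "t * (1/2::real)^Suc p = 1/2 * (t * (1/2)^p)" by simp
  ultimately have "t * (1/2)^Suc p < 1/2" using Suc.prems by linarith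
  moreover have "2 * (t * (1/2)^Suc p) = t * (1/2)^p" by simp
  ultimately show ?case using Suc by simp
qed

lemma Dt_range: "0 \<le> x \<Longrightarrow> x < 1 \<Longrightarrow> 0 \<le> Dt p x \<and> Dt p x < 1"
proof (induction p arbitrary: x)
  case 0 then show ?case by simp
next
  case (Suc p)
  show ?case
  proof (cases "x < 1/2")
    case True then show ?thesis using Suc.IH[of "2*x"] Suc.prems by simp
  next
    case False then show ?thesis using Suc.IH[of "2*x-1"] Suc.prems by simp
  qed
qed

lemma K_Dt_inj: "0 \<le> x \<Longrightarrow> x < 1 \<Longrightarrow> 0 \<le> y \<Longrightarrow> y < 1 \<Longrightarrow> K p x = K p y \<Longrightarrow> Dt p x = Dt p y \<Longrightarrow> x = y"
proof (induction p arbitrary: x y)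
  case 0 then show ?case by simp
next
  case (Suc p)
  show ?case
  proof (cases "x < 1/2")
    case xT: True
    show ?thesis
    proof (cases "y < 1/2")
      case True
      then show ?thesis using xT Suc.IH[of "2*x" "2*y"] Suc.prems by simp
    next
      case False
      then have "K (Suc p) x = 2 * K p (2*x)" "K (Suc p) y = 1 + 2 * K p (2*y-1)" using xT by auto
      then show ?thesis using Suc.prems by presburger
    qed
  next
    case xF: False
    show ?thesis
    proof (cases "y < 1/2")
      case True
      then have "K (Suc p) y = 2 * K p (2*y)" "K (Suc p) x = 1 + 2 * K p (2*x-1)" using xF by auto
      then show ?thesis using Suc.prems by presburger
    next
      case False
      then show ?thesis using xF Suc.IH[of "2*x-1" "2*y-1"] Suc.prems by simp
    qed
  qed
qed

lemma Phi_eq: "Phi p (u, v) = ((odo^^nat \<lfloor>v\<rfloor>) u, frac v)"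
  unfolding Phi_def flow_def by simp

lemma Phi_exists:
  assumes "0 \<le> x" "x < 1" "0 \<le> y" "y < 1"
  shows "(Dt p x * (1/2)^p, real (K p x) + y) \<in> Phi_dom p \<and> Phi p (Dt p x * (1/2)^p, real (K p x) + y) = (x, y)"
proof -
  let ?u = "Dt p x * (1/2)^p"
  have D: "0 \<le> Dt p x" "Dt p x < 1" using Dt_range assms by auto
  have u: "0 \<le> ?u" "?u < (1/2)^p" using D by auto
  have Ku: "K p ?u = 0" using K_small u by blast
  have fl: "\<lfloor>real (K p x) + y\<rfloor> = int (K p x)" using assms by (simp add: floor_eq_iff)
  have fr: "frac (real (K p x) + y) = y" using assms by (simp add: frac_def fl)
  have "(1/2::real)^p \<le> 1" by (simp add: power_le_one)
  then have u1: "0 \<le> ?u" "?u < 1" using u by linarith+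
  have kb: "K p x < 2^p" by (rule K_bound)
  have A: "K p ((odo^^K p x) ?u) = K p x" using K_odo_iter[OF u1, of "K p x" p] Ku kb by simp
  have B: "Dt p ((odo^^K p x) ?u) = Dt p x" using Dt_odo_iter[OF u1, of p "K p x"] Ku kb Dt_small D by simp
  have R: "0 \<le> (odo^^K p x) ?u" "(odo^^K p x) ?u < 1" using K_odo_iter[OF u1] by auto
  have E: "(odo^^K p x) ?u = x" using K_Dt_inj[OF R assms(1,2) A B] .
  have "real (K p x) + y < 2^p"
  proof -
    have "real (K p x) + 1 \<le> 2^p" using kb by (metis of_nat_Suc Suc_leI of_nat_le_iff of_nat_numeral of_nat_power add.commute)
    then show ?thesis using assms by linarith
  qed
  then have dom: "(?u, real (K p x) + y) \<in> Phi_dom p" unfolding Phi_dom_def using u assms by auto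
  show ?thesis using dom E Phi_eq[of p ?u "real (K p x) + y"] fl fr by simp
qed

lemma Phi_unique:
  assumes "(u, v) \<in> Phi_dom p" "Phi p (u, v) = (x, y)"
  shows "v = real (K p x) + y"
proof -
  have u: "0 \<le> u" "u < (1/2)^p" "0 \<le> v" "v < 2^p" using assms(1) unfolding Phi_dom_def by auto
  have "(1/2::real)^p \<le> 1" by (simp add: power_le_one)
  then have u1: "0 \<le> u" "u < 1" using u by auto
  have Ku: "K p u = 0" using K_small u by blast
  let ?k = "nat \<lfloor>v\<rfloor>"
  have kv: "real ?k = of_int \<lfloor>v\<rfloor>" using u by simp
  have "of_int \<lfloor>v\<rfloor> < (2::real)^p" using u by linarith
  then have kb: "?k < 2^p" using kv by (metis of_nat_less_iff of_nat_numeral of_nat_power)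
  have x: "x = (odo^^?k) u" "y = frac v" using assms(2) Phi_eq by auto
  have "K p x = ?k" using K_odo_iter[OF u1, of ?k p] Ku kb x by simp
  then show ?thesis using x kv by (simp add: frac_def)
qed

lemma Phi_inv_snd:
  assumes "z \<in> Mset"
  shows "snd (Phi_inv p z) = real (K p (fst z)) + snd z"
proof -
  obtain x y where z: "z = (x, y)" "0 \<le> x" "x < 1" "0 \<le> y" "y < 1" using assms unfolding Mset_def by auto
  have ex: "\<exists>w. w \<in> Phi_dom p \<and> Phi p w = z" using Phi_exists[OF z(2-5)] z(1) by blast
  have "Phi_inv p z \<in> Phi_dom p \<and> Phi p (Phi_inv p z) = z"
    unfolding Phi_inv_def inv_into_def using someI_ex[OF ex] by simp
  then show ?thesis using Phi_unique[of "fst (Phi_inv p z)" "snd (Phi_inv p z)" p x y] z by simp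
qed

lemma K_dist: fixes F :: "nat \<Rightarrow> real" shows "((\<lambda>x. F (K p x)) has_integral (\<Sum>k<2^p. F k) / 2^p) {0..1::real}"
proof (induction p arbitrary: F)
  case 0
  show ?case using has_integral_const_real[of "F 0" 0 1] by simp
next
  case (Suc p)
  let ?F1 = "\<lambda>k. F (2*k)" and ?F2 = "\<lambda>k. F (1 + 2*k)"
  have h1: "((\<lambda>x. ?F1 (K p (2*x + 0))) has_integral ((\<Sum>k<2^p. ?F1 k) / 2^p) / 2) {0..1/2}"
    using has_integral_affinity'[OF Suc.IH[of ?F1, unfolded box_real(2)[symmetric]], of 2 0] by (simp add: mult.commute)
  have h2: "((\<lambda>x. ?F2 (K p (2*x + -1))) has_integral ((\<Sum>k<2^p. ?F2 k) / 2^p) / 2) {1/2..1}"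
    using has_integral_affinity'[OF Suc.IH[of ?F2, unfolded box_real(2)[symmetric]], of 2 "-1"] by (simp add: mult.commute)
  have g1: "((\<lambda>x. F (K (Suc p) x)) has_integral ((\<Sum>k<2^p. ?F1 k) / 2^p) / 2) {0..1/2}"
    by (rule has_integral_spike_finite[OF _ _ h1, of "{1/2}"]) auto
  have g2: "((\<lambda>x. F (K (Suc p) x)) has_integral ((\<Sum>k<2^p. ?F2 k) / 2^p) / 2) {1/2..1}"
    by (rule has_integral_spike_finite[OF _ _ h2, of "{}"]) auto
  have "((\<lambda>x. F (K (Suc p) x)) has_integral ((\<Sum>k<2^p. ?F1 k) / 2^p) / 2 + ((\<Sum>k<2^p. ?F2 k) / 2^p) / 2) {0..1}"
    by (rule has_integral_combine[OF _ _ g1 g2]) auto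
  moreover have "(\<Sum>k<2^Suc p. F k) = (\<Sum>k<2^p. ?F1 k) + (\<Sum>k<2^p. ?F2 k)"
    using sum_split_even_odd[where f=F and g=F and n="2^p"] by (simp add: add.commute)
  ultimately show ?case by (simp add: field_simps)
qed

definition gG :: "real \<Rightarrow> real \<Rightarrow> nat \<Rightarrow> real \<Rightarrow> real" where
  "gG a d p v = fpiece a d p (0, v)"

lemma fpiece_snd: "fpiece a d p uv = gG a d p (snd uv)"
  unfolding gG_def fpiece_def Let_def by simp

lemma gG_bound: "\<bar>gG a d p v\<bar> \<le> \<bar>a\<bar>"
  unfolding gG_def fpiece_def Let_def by simp

lemma gG_meas[measurable]: "gG a d p \<in> borel_measurable borel"
proof -
  define L where "L = d * 2 powr (real p - 1)"
  define H where "H = 2 powr (real p - 1)"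
  have e: "gG a d p = (\<lambda>v. if v \<in> {0..<L} then a else if v \<in> {H..<H+L} then -a else 0)"
    unfolding gG_def fpiece_def Let_def L_def H_def by (simp add: fun_eq_iff)
  show ?thesis unfolding e
    by (intro measurable_If_set measurable_const) auto
qed

lemma gG_anti:
  assumes "0 < d" "d < 1" "0 \<le> v" "v < 2 powr (real p - 1)"
  shows "gG a d p (v + 2 powr (real p - 1)) = - gG a d p v"
proof -
  let ?H = "2 powr (real p - 1)"
  have H: "?H > 0" by simp
  have L: "d * ?H < ?H" using assms H by simp
  have L0: "d * ?H > 0" using assms H by simp
  have n1: "\<not> (v + ?H < d * ?H)" using assms L by linarith
  show ?thesis
  proof (cases "v < d * ?H")
    case True
    then show ?thesis unfolding gG_def fpiece_def Let_def using n1 assms by simp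
  next
    case False
    then have "\<not> (v + ?H < ?H + d * ?H)" by linarith
    moreover have "\<not> (?H \<le> v)" using assms by linarith
    ultimately show ?thesis unfolding gG_def fpiece_def Let_def using n1 False by simp
  qed
qed

lemma K_meas_base: "(\<lambda>x. real (K p x)) \<in> borel_measurable borel"
proof (induction p)
  case 0 then show ?case by simp
next
  case (Suc p)
  have a: "(\<lambda>x. real (K p (2*x))) \<in> borel_measurable borel"
    using measurable_compose[OF _ Suc, of "\<lambda>x. 2*x" borel] by simp
  have b: "(\<lambda>x. real (K p (2*x-1))) \<in> borel_measurable borel"
    using measurable_compose[OF _ Suc, of "\<lambda>x. 2*x-1" borel] by simp
  have "(\<lambda>x. if x < 1/2 then 2 * real (K p (2*x)) else 1 + 2 * real (K p (2*x-1))) \<in> borel_measurable borel"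
    using a b by measurable
  moreover have "(\<lambda>x. real (K (Suc p) x)) = (\<lambda>x. if x < 1/2 then 2 * real (K p (2*x)) else 1 + 2 * real (K p (2*x-1)))"
    by auto
  ultimately show ?case by simp
qed

lemma K_meas[measurable (raw)]: "f \<in> borel_measurable M \<Longrightarrow> (\<lambda>x. real (K p (f x))) \<in> borel_measurable M"
  using measurable_compose[OF _ K_meas_base] by blast

lemma sum_lessThan_add_nat: "(\<Sum>k<m+n. f k) = (\<Sum>k<m. f k) + (\<Sum>k<n. f (m + k :: nat))"
  by (induction n) (auto simp: add.assoc)

lemma gG_sum_zero:
  assumes "p \<ge> 1" "0 < d" "d < 1" "0 \<le> y" "y < 1"
  shows "(\<Sum>k<2^p. gG a d p (real k + y)) = 0"
proof -
  define N :: nat where "N = 2^(p-1)"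
  have pN: "(2::nat)^p = N + N" unfolding N_def using assms(1)
    by (metis Suc_diff_le diff_Suc_1 mult_2 power_Suc)
  have HN: "2 powr (real p - 1) = real N" unfolding N_def using assms(1)
    by (simp add: powr_realpow[symmetric] of_nat_diff)
  have "(\<Sum>k<2^p. gG a d p (real k + y)) = (\<Sum>k<N. gG a d p (real k + y)) + (\<Sum>k<N. gG a d p (real (N + k) + y))"
    unfolding pN sum_lessThan_add_nat ..
  also have "(\<Sum>k<N. gG a d p (real (N + k) + y)) = (\<Sum>k<N. - gG a d p (real k + y))"
  proof (rule sum.cong[OF refl])
    fix k assume "k \<in> {..<N}"
    then have "real k + 1 \<le> real N" by simp
    then have "real k + y < 2 powr (real p - 1)" using HN assms by linarith
    then have "gG a d p ((real k + y) + 2 powr (real p - 1)) = - gG a d p (real k + y)"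
      using gG_anti assms by simp
    then show "gG a d p (real (N + k) + y) = - gG a d p (real k + y)" using HN by (simp add: algebra_simps)
  qed
  finally show ?thesis by (simp add: sum_negf)
qed

lemma inner_zero:
  assumes "p \<ge> 1" "0 < d" "d < 1" "0 \<le> y" "y < 1"
  shows "(LINT x|lborel. indicator {0..<1} x * gG a d p (real (K p x) + y)) = 0"
proof -
  let ?f = "\<lambda>x. gG a d p (real (K p x) + y)"
  have si: "set_integrable lborel {0..1} ?f"
    unfolding set_integrable_def
    by (rule integrableI_bounded_set_indicator[where B="\<bar>a\<bar>"]) (simp_all add: gG_bound)
  have "(LINT x:{0..1}|lborel. ?f x) = integral {0..1} ?f"
    using set_borel_integral_eq_integral(2)[OF si] .
  also have "\<dots> = 0"
    using integral_unique[OF K_dist[of "\<lambda>k. gG a d p (real k + y)" p]] gG_sum_zero[OF assms] by simp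
  finally have z: "(LINT x:{0..1}|lborel. ?f x) = 0" .
  have "(LINT x:{0..<1}|lborel. ?f x) = (LINT x:{0..1}|lborel. ?f x)"
    by (rule set_integral_discrete_difference[where X="{1}"]) auto
  then show ?thesis using z unfolding set_lebesgue_integral_def by simp
qed

lemma Mset_borel: "Mset \<in> sets borel"
  unfolding Mset_def by (intro borel_Times) auto

lemma Mset_lebesgue: "Mset \<in> sets lebesgue"
  using Mset_borel by (simp add: sets_completionI_sets)

lemma Mset_pair: "Mset \<in> sets (lborel \<Otimes>\<^sub>M lborel)"
  unfolding Mset_def by (intro pair_measureI) auto

lemma Mset_pair': "Mset \<in> sets (borel \<Otimes>\<^sub>M borel)"
  unfolding Mset_def by (intro pair_measureI) auto

lemma emeasure_Mset: "emeasure (lborel \<Otimes>\<^sub>M lborel) Mset = 1"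
  unfolding Mset_def by (subst lborel.emeasure_pair_measure_Times) auto

lemma hmeas_pair[measurable]:
  "(\<lambda>z. gG a d p (real (K p (fst z)) + snd z)) \<in> borel_measurable (lborel \<Otimes>\<^sub>M lborel)"
  by measurable

lemma hmeas_borel:
  "(\<lambda>z::real\<times>real. gG a d p (real (K p (fst z)) + snd z)) \<in> borel_measurable borel"
  using hmeas_pair[of a d p] unfolding lborel_prod measurable_lborel2 .

lemma hmeas_lebesgue_on:
  "(\<lambda>z::real\<times>real. gG a d p (real (K p (fst z)) + snd z)) \<in> borel_measurable (lebesgue_on S)"
  by (rule measurable_restrict_space1) (rule measurable_completion[OF hmeas_borel[unfolded measurable_lborel2[symmetric]]])

lemma int2_zero:
  assumes "p \<ge> 1" "0 < d" "d < 1"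
  shows "integral\<^sup>L (lebesgue_on Mset) (\<lambda>z. gG a d p (real (K p (fst z)) + snd z)) = 0"
proof -
  let ?h = "\<lambda>z::real\<times>real. gG a d p (real (K p (fst z)) + snd z)"
  have "integral\<^sup>L (lebesgue_on Mset) ?h = integral\<^sup>L lebesgue (\<lambda>z. indicator Mset z *\<^sub>R ?h z)"
    by (rule integral_restrict_space) (simp add: Mset_lebesgue)
  also have "\<dots> = integral\<^sup>L lborel (\<lambda>z. indicator Mset z *\<^sub>R ?h z)"
    by (rule integral_completion) (use Mset_borel hmeas_borel in measurable)
  also have "\<dots> = integral\<^sup>L (lborel \<Otimes>\<^sub>M lborel) (\<lambda>z. indicator Mset z *\<^sub>R ?h z)"
    unfolding lborel_prod ..
  also have "\<dots> = integral\<^sup>L (lborel \<Otimes>\<^sub>M lborel) (case_prod (\<lambda>x y. indicator Mset (x,y) * ?h (x,y)))"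
    by (simp add: case_prod_beta')
  also have "\<dots> = (LINT y|lborel. LINT x|lborel. indicator Mset (x,y) * ?h (x,y))"
  proof (rule lborel_pair.integral_snd[symmetric])
    show "integrable (lborel \<Otimes>\<^sub>M lborel) (\<lambda>(x, y). indicator Mset (x, y) * ?h (x, y))"
    proof -
      have "integrable (lborel \<Otimes>\<^sub>M lborel) (\<lambda>z. indicator Mset z *\<^sub>R ?h z)"
        by (rule integrableI_bounded_set_indicator[where B="\<bar>a\<bar>"])
           (simp_all add: Mset_pair Mset_pair' emeasure_Mset gG_bound)
      then show ?thesis by (simp add: case_prod_beta')
    qed
  qed
  also have "\<dots> = 0"
  proof -
    have ih: "(LINT x|lborel. indicator Mset (x,y) * ?h (x,y)) = 0" for y
    proof (cases "0 \<le> y \<and> y < 1")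
      case True
      have "(LINT x|lborel. indicator Mset (x,y) * ?h (x,y))
          = (LINT x|lborel. indicator {0..<1} x * gG a d p (real (K p x) + y))"
        using True by (intro Bochner_Integration.integral_cong) (auto simp: Mset_def indicator_def)
      then show ?thesis using inner_zero[OF assms] True by simp
    next
      case False
      then have "\<And>x. indicator Mset (x,y) = (0::real)" by (auto simp: Mset_def)
      then show ?thesis by simp
    qed
    show ?thesis using ih by simp
  qed
  finally show ?thesis by simp
qed

lemma space_LM: "space (lebesgue_on Mset) = Mset"
  by (simp add: space_restrict_space)

lemma emeasure_LM: "emeasure (lebesgue_on Mset) Mset = 1"
proof -
  have "emeasure (lebesgue_on Mset) Mset = emeasure lebesgue Mset"
    by (rule emeasure_restrict_space) (auto simp: Mset_lebesgue)
  also have "\<dots> = emeasure lborel Mset"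
    using Mset_borel by (simp add: emeasure_completion main_part_sets)
  also have "\<dots> = 1" using emeasure_Mset unfolding lborel_prod .
  finally show ?thesis .
qed

lemma measure_LM: "measure (lebesgue_on Mset) Mset = 1"
  using emeasure_LM by (simp add: measure_def)

lemma int_LM_bounded:
  fixes f :: "real \<times> real \<Rightarrow> real"
  assumes "f \<in> borel_measurable (lebesgue_on Mset)" "\<And>z. z \<in> Mset \<Longrightarrow> \<bar>f z\<bar> \<le> B"
  shows "integrable (lebesgue_on Mset) f"
  by (rule integrableI_bounded_set[where A=Mset and B=B])
     (use assms emeasure_LM space_LM in \<open>auto intro!: AE_I2 simp: sets.top[of "lebesgue_on Mset", unfolded space_LM]\<close>)

lemma ffun_eq: "z \<in> Mset \<Longrightarrow> ffun a d p z = (\<Sum>n. gG (a n) (d n) (p n) (real (K (p n) (fst z)) + snd z))"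
  unfolding ffun_def fpiece_snd by (simp add: Phi_inv_snd)

lemma ffun_integral:
  fixes p :: "nat \<Rightarrow> nat" and a d :: "nat \<Rightarrow> real"
  assumes p_pos: "\<And>n. p n \<ge> 1"
    and d_range: "\<And>n. 0 < d n \<and> d n < 1/2"
    and a_pos: "\<And>n. a n > 0"
    and a_summable: "summable a"
  shows "integrable (lebesgue_on Mset) (ffun a d p) \<and> integral\<^sup>L (lebesgue_on Mset) (ffun a d p) = 0"
proof -
  let ?M = "lebesgue_on Mset"
  define h where "h n z = gG (a n) (d n) (p n) (real (K (p n) (fst z)) + snd z)" for n z
  have hb: "\<bar>h n z\<bar> \<le> a n" for n z unfolding h_def using gG_bound[of "a n"] a_pos[of n] by simp
  have hm: "h n \<in> borel_measurable ?M" for n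
  proof -
    have "h n = (\<lambda>z. gG (a n) (d n) (p n) (real (K (p n) (fst z)) + snd z))" by (rule ext) (simp add: h_def)
    then show ?thesis by (simp add: hmeas_lebesgue_on)
  qed
  have hi: "integrable ?M (h n)" for n
    by (rule int_LM_bounded[where B="a n"]) (use hm hb in auto)
  have hs: "AE z in ?M. summable (\<lambda>n. norm (h n z))"
    by (rule AE_I2) (rule summable_comparison_test[OF _ a_summable], use hb in auto)
  have hn: "(LINT z|?M. norm (h n z)) \<le> a n" for n
  proof -
    have "(LINT z|?M. norm (h n z)) \<le> (LINT z|?M. a n)"
    proof (rule integral_mono)
      show "integrable ?M (\<lambda>z. norm (h n z))" using hi by (rule integrable_norm)
      show "integrable ?M (\<lambda>z. a n)" by (rule int_LM_bounded[where B="\<bar>a n\<bar>"]) auto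
      show "norm (h n z) \<le> a n" for z using hb by simp
    qed
    also have "\<dots> = a n" by (simp add: space_LM measure_LM)
    finally show ?thesis .
  qed
  have hsum: "summable (\<lambda>n. LINT z|?M. norm (h n z))"
    by (rule summable_comparison_test[OF _ a_summable]) (use hn in auto)
  have eq: "integrable ?M (ffun a d p) = integrable ?M (\<lambda>z. \<Sum>n. h n z)"
    by (rule Bochner_Integration.integrable_cong) (auto simp: space_LM ffun_eq h_def)
  have eq2: "integral\<^sup>L ?M (ffun a d p) = integral\<^sup>L ?M (\<lambda>z. \<Sum>n. h n z)"
    by (rule Bochner_Integration.integral_cong) (auto simp: space_LM ffun_eq h_def)
  have z: "integral\<^sup>L ?M (h n) = 0" for n
    unfolding h_def
    by (rule int2_zero) (use p_pos d_range[of n] in auto)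
  show ?thesis
    using integrable_suminf[OF hi hs hsum] integral_suminf[OF hi hs hsum] eq eq2 z by simp
qed

definition Pm :: "nat \<Rightarrow> real \<Rightarrow> real" where
  "Pm q v = v - 2^q * of_int \<lfloor>v / 2^q\<rfloor>"

lemma Pm_meas[measurable]: "Pm q \<in> borel_measurable borel"
  unfolding Pm_def by measurable

lemma Pm_range: "0 \<le> Pm q v \<and> Pm q v < 2^q"
proof -
  have P: "(2::real)^q > 0" by simp
  have "of_int \<lfloor>v / 2^q\<rfloor> \<le> v / 2^q" "v / 2^q < of_int \<lfloor>v / 2^q\<rfloor> + 1"
    by linarith+
  then have "2^q * of_int \<lfloor>v / 2^q\<rfloor> \<le> 2^q * (v / 2^q)" "2^q * (v / 2^q) < 2^q * (of_int \<lfloor>v / 2^q\<rfloor> + 1)"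
    using P by (intro mult_left_mono mult_strict_left_mono; simp)+
  then have "2^q * of_int \<lfloor>v / 2^q\<rfloor> \<le> v" "v < 2^q * (of_int \<lfloor>v / 2^q\<rfloor> + 1)"
    using P by simp_all
  then show ?thesis unfolding Pm_def by (simp add: algebra_simps)
qed

lemma Pm_char:
  assumes "0 \<le> w" "w < 2^q" "v = w + 2^q * of_int k"
  shows "Pm q v = w"
proof -
  have P: "(2::real)^q > 0" by simp
  have "v / 2^q = w / 2^q + of_int k" using assms(3) P by (simp add: field_simps)
  moreover have "0 \<le> w / 2^q" "w / 2^q < 1" using assms P by auto
  ultimately have "\<lfloor>v / 2^q\<rfloor> = k" by (simp add: floor_eq_iff)
  then show ?thesis unfolding Pm_def using assms(3) by simp
qed

lemma Pm_decomp: "v = Pm q v + 2^q * of_int \<lfloor>v / 2^q\<rfloor>"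
  unfolding Pm_def by simp

lemma flow_rep:
  assumes z: "z \<in> Mset" and s: "0 \<le> s"
  shows "flow s z \<in> Mset \<and> real (K q (fst (flow s z))) + snd (flow s z) = Pm q (real (K q (fst z)) + snd z + s)"
proof -
  obtain x y where xy: "z = (x, y)" "0 \<le> x" "x < 1" "0 \<le> y" "y < 1" using z unfolding Mset_def by auto
  let ?k = "nat \<lfloor>y + s\<rfloor>"
  have fl: "flow s z = ((odo^^?k) x, frac (y + s))" unfolding flow_def xy by simp
  have it: "0 \<le> (odo^^?k) x" "(odo^^?k) x < 1" "K q ((odo^^?k) x) = (K q x + ?k) mod 2^q"
    using K_odo_iter[OF xy(2,3)] by auto
  have inM: "flow s z \<in> Mset" unfolding fl Mset_def using it frac_lt_1 frac_ge_0 by auto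
  have kk: "real ?k = of_int \<lfloor>y + s\<rfloor>" using xy s by simp
  have ys: "y + s = real ?k + frac (y + s)" using kk by (simp add: frac_def)
  let ?N = "K q x + ?k"
  have Nd: "?N = ?N mod 2^q + 2^q * (?N div 2^q)" by simp
  have "Pm q (real (K q x) + y + s) = real (?N mod 2^q) + frac (y + s)"
  proof (rule Pm_char)
    show "0 \<le> real (?N mod 2^q) + frac (y + s)" by simp
    have "?N mod 2^q < 2^q" by simp
    then have "?N mod 2^q + 1 \<le> 2^q" by linarith
    then have "real (?N mod 2^q) + 1 \<le> 2^q" by (metis of_nat_1 of_nat_add of_nat_le_iff of_nat_numeral of_nat_power)
    then show "real (?N mod 2^q) + frac (y + s) < 2^q" using frac_lt_1[of "y+s"] by linarith
    have "real ?N = real (?N mod 2^q) + 2^q * real (?N div 2^q)"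
      by (metis Nd of_nat_add of_nat_mult of_nat_numeral of_nat_power)
    then show "real (K q x) + y + s = real (?N mod 2^q) + frac (y + s) + 2^q * of_int (int (?N div 2^q))"
      using ys by simp
  qed
  then show ?thesis using inM fl it xy by simp
qed

lemma phi_anti:
  assumes "q \<ge> 1" "0 < dd" "dd < 1"
  shows "gG aa dd q (Pm q (v + 2 powr (real q - 1))) = - gG aa dd q (Pm q v)"
proof -
  let ?H = "2 powr (real q - 1)"
  have PH: "(2::real)^q = 2 * ?H" using assms(1)
    by (simp add: powr_realpow[symmetric] powr_diff)
  let ?w = "Pm q v"
  have w: "0 \<le> ?w" "?w < 2^q" using Pm_range by auto
  have dec: "v = ?w + 2^q * of_int \<lfloor>v / 2^q\<rfloor>" by (rule Pm_decomp)
  show ?thesis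
  proof (cases "?w < ?H")
    case True
    have "Pm q (v + ?H) = ?w + ?H"
      by (rule Pm_char[where k="\<lfloor>v / 2^q\<rfloor>"]) (use w True PH dec in auto)
    then show ?thesis using gG_anti[OF assms(2,3) w(1) True] by simp
  next
    case False
    have e: "Pm q (v + ?H) = ?w - ?H"
      by (rule Pm_char[where k="\<lfloor>v / 2^q\<rfloor> + 1"]) (use w False PH dec in \<open>auto simp: algebra_simps\<close>)
    have "gG aa dd q ((?w - ?H) + ?H) = - gG aa dd q (?w - ?H)"
      by (rule gG_anti) (use assms False w PH in auto)
    then show ?thesis using e by simp
  qed
qed

lemma bdd_set_integrable:
  fixes f :: "real \<Rightarrow> real"
  assumes "f \<in> borel_measurable borel" "\<And>x. \<bar>f x\<bar> \<le> B"
  shows "set_integrable lborel {a..b} f"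
  unfolding set_integrable_def
  by (rule integrableI_bounded_set_indicator[where B=B]) (use assms in \<open>auto, cases "a \<le> b", auto\<close>)

lemma bdd_integrable_on:
  fixes f :: "real \<Rightarrow> real"
  assumes "f \<in> borel_measurable borel" "\<And>x. \<bar>f x\<bar> \<le> B"
  shows "f integrable_on {a..b}"
  using set_borel_integral_eq_integral(1)[OF bdd_set_integrable[OF assms]] .

lemma psi_meas: "(\<lambda>s. gG aa dd q (Pm q (c + s))) \<in> borel_measurable borel"
  by measurable

lemma psi_int: "(\<lambda>s. gG aa dd q (Pm q (c + s))) integrable_on {a..b}"
  by (rule bdd_integrable_on[OF psi_meas]) (rule gG_bound)

lemma AZ:
  assumes "q \<ge> 1" "0 < dd" "dd < 1"
  shows "integral {0..2 * 2 powr (real q - 1)} (\<lambda>s. gG aa dd q (Pm q (c + s))) = 0"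
proof -
  let ?H = "2 powr (real q - 1)"
  let ?psi = "\<lambda>s. gG aa dd q (Pm q (c + s))"
  have H: "?H > 0" by simp
  have c1: "integral {0..?H} ?psi + integral {?H..2*?H} ?psi = integral {0..2*?H} ?psi"
    by (rule Henstock_Kurzweil_Integration.integral_combine[OF _ _ psi_int]) (use H in simp_all)
  have c2: "integral {?H..2*?H} ?psi = integral {0..?H} (?psi \<circ> (+) ?H)"
  proof -
    have "integral {0..?H} (?psi \<circ> (+) ?H) = integral {0+?H..?H+?H} ?psi"
      by (rule integral_shift_Icc_real)
    moreover have "?H + ?H = 2 * ?H" by simp
    ultimately show ?thesis by simp
  qed
  have c3: "(?psi \<circ> (+) ?H) = (\<lambda>s. - ?psi s)"
  proof
    fix s
    have "(?psi \<circ> (+) ?H) s = gG aa dd q (Pm q ((c + s) + ?H))" by (simp add: add_ac)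
    also have "\<dots> = - ?psi s" by (rule phi_anti[OF assms])
    finally show "(?psi \<circ> (+) ?H) s = - ?psi s" .
  qed
  have c4: "integral {0..?H} (\<lambda>s. - ?psi s) = - integral {0..?H} ?psi"
    by (rule integral_neg)
  show ?thesis using c1 c2 c3 c4 by simp
qed

lemma AZk:
  assumes "q \<ge> 1" "0 < dd" "dd < 1"
  shows "integral {0..2 * 2 powr (real q - 1) * real k} (\<lambda>s. gG aa dd q (Pm q (c + s))) = 0"
proof (induction k arbitrary: c)
  case 0 then show ?case by simp
next
  case (Suc k)
  define T where "T = 2 * 2 powr (real q - 1)"
  let ?psi = "\<lambda>s. gG aa dd q (Pm q (c + s))"
  have T: "T > 0" unfolding T_def by simp
  have le1: "0 \<le> T * real k" using T by simp
  have le2: "T * real k \<le> T * real (Suc k)" using T by simp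
  have c1: "integral {0..T * real k} ?psi + integral {T * real k..T * real (Suc k)} ?psi = integral {0..T * real (Suc k)} ?psi"
    by (rule Henstock_Kurzweil_Integration.integral_combine[OF le1 le2 psi_int])
  have c2: "integral {T * real k..T * real (Suc k)} ?psi = integral {0..T} (?psi \<circ> (+) (T * real k))"
  proof -
    have "integral {0..T} (?psi \<circ> (+) (T * real k)) = integral {0+T * real k..T+T * real k} ?psi"
      by (rule integral_shift_Icc_real)
    moreover have "T + T * real k = T * real (Suc k)" by (simp add: algebra_simps)
    ultimately show ?thesis by simp
  qed
  have c3: "(?psi \<circ> (+) (T * real k)) = (\<lambda>s. gG aa dd q (Pm q ((c + T * real k) + s)))"
    by (rule ext) (simp add: add_ac)
  have c4: "integral {0..T} (\<lambda>s. gG aa dd q (Pm q ((c + T * real k) + s))) = 0"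
    unfolding T_def by (rule AZ[OF assms])
  have c5: "integral {0..T * real k} ?psi = 0" using Suc.IH[of c] unfolding T_def .
  show ?case using c1 c2 c3 c4 c5 unfolding T_def by simp
qed

lemma gG_abs_ind:
  assumes "0 \<le> aa"
  shows "\<bar>gG aa dd q u\<bar> \<le> aa * (indicator {0..<dd * 2 powr (real q - 1)} u
     + indicator {2 powr (real q - 1)..<2 powr (real q - 1) + dd * 2 powr (real q - 1)} u)"
  using assms unfolding gG_def fpiece_def Let_def by (auto simp: indicator_def)

lemma ind_shift: "indicator {\<alpha>..<\<beta>} (c + s) = (indicator {\<alpha> - c..<\<beta> - c} (s::real) :: real)"
  by (auto simp: indicator_def)

lemma Bn:
  assumes "q \<ge> 1" "0 < dd" "dd < 1" "0 \<le> aa" "0 \<le> c" "c < 2^q"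
  shows "\<bar>LINT s|lborel. indicator {0..2 powr (real q - 2)} s * gG aa dd q (Pm q (c + s))\<bar>
           \<le> 4 * aa * (dd * 2 powr (real q - 1))"
proof -
  let ?H = "2 powr (real q - 1)"
  let ?L = "dd * ?H"
  have PH: "(2::real)^q = 2 * ?H" using assms(1)
    by (simp add: powr_realpow[symmetric] powr_diff)
  have tH: "2 powr (real q - 2) = ?H / 2" by (simp add: powr_diff)
  have H: "?H > 0" by simp
  have L: "0 \<le> ?L" using assms H by simp
  define g where "g s = aa * (indicator {0..<?L} (c + s) + indicator {?H..<?H + ?L} (c + s)
       + indicator {2*?H..<2*?H + ?L} (c + s) + indicator {3*?H..<3*?H + ?L} (c + s))" for s
  have g0: "0 \<le> g s" for s unfolding g_def using assms by simp
  have i: "integrable lborel (indicator {\<alpha>..<\<beta>} :: real \<Rightarrow> real)" for \<alpha> \<beta>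
    by (cases "\<alpha> \<le> \<beta>") auto
  have gint: "integrable lborel g"
    unfolding g_def ind_shift by (rule Bochner_Integration.integrable_mult_right[OF Bochner_Integration.integrable_add[OF Bochner_Integration.integrable_add[OF Bochner_Integration.integrable_add[OF i i] i] i]])
  have gval: "(LINT s|lborel. g s) = 4 * aa * ?L"
    unfolding g_def ind_shift using L
    by (simp add: i Bochner_Integration.integral_add measure_def)
  have bnd: "\<bar>indicator {0..2 powr (real q - 2)} s * gG aa dd q (Pm q (c + s))\<bar> \<le> g s" for s
  proof (cases "s \<in> {0..2 powr (real q - 2)}")
    case False then show ?thesis using g0 by simp
  next
    case True
    then have s: "0 \<le> s" "s \<le> ?H / 2" using tH by auto
    have w: "0 \<le> c + s" "c + s < 4 * ?H" using s assms PH H by auto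
    have ab: "\<bar>gG aa dd q (Pm q (c + s))\<bar> \<le> aa * (indicator {0..<?L} (Pm q (c+s)) + indicator {?H..<?H + ?L} (Pm q (c+s)))"
      by (rule gG_abs_ind[OF assms(4)])
    show ?thesis
    proof (cases "c + s < 2 * ?H")
      case True
      have "Pm q (c + s) = c + s" by (rule Pm_char[where k=0]) (use w True PH in auto)
      then show ?thesis using ab True unfolding g_def using assms(4)
        by (auto simp: indicator_def)
    next
      case False
      have pm: "Pm q (c + s) = c + s - 2 * ?H" by (rule Pm_char[where k=1]) (use w False PH in auto)
      have "indicator {0..<?L} (c + s - 2 * ?H) + indicator {?H..<?H + ?L} (c + s - 2 * ?H)
            \<le> (indicator {2*?H..<2*?H + ?L} (c + s) + indicator {3*?H..<3*?H + ?L} (c + s) :: real)"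
        by (auto simp: indicator_def)
      then have "\<bar>gG aa dd q (Pm q (c + s))\<bar> \<le> aa * (indicator {2*?H..<2*?H + ?L} (c + s) + indicator {3*?H..<3*?H + ?L} (c + s))"
        using ab pm assms(4) by (smt (verit) mult_left_mono)
      then show ?thesis using True unfolding g_def using assms(4)
        by (auto simp: indicator_def)
    qed
  qed
  have fint: "integrable lborel (\<lambda>s. indicator {0..2 powr (real q - 2)} s * gG aa dd q (Pm q (c + s)))"
    using bdd_set_integrable[OF psi_meas gG_bound] unfolding set_integrable_def by simp
  have "\<bar>LINT s|lborel. indicator {0..2 powr (real q - 2)} s * gG aa dd q (Pm q (c + s))\<bar> \<le> (LINT s|lborel. g s)"
    by (rule integral_abs_bound_integral[OF fint gint]) (use bnd in auto)
  then show ?thesis using gval by simp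
qed

lemma p_mono:
  fixes p :: "nat \<Rightarrow> nat"
  assumes p_gap: "\<And>n. p (Suc n) \<ge> p n + 2"
  shows "m < n \<Longrightarrow> p m + 2 \<le> p n"
proof (induction n)
  case 0 then show ?case by simp
next
  case (Suc n)
  show ?case
  proof (cases "m < n")
    case True then show ?thesis using Suc.IH p_gap[of n] by simp
  next
    case False then have "m = n" using Suc.prems by simp
    then show ?thesis using p_gap[of n] by simp
  qed
qed

lemma c_range:
  assumes "z \<in> Mset"
  shows "0 \<le> real (K q (fst z)) + snd z \<and> real (K q (fst z)) + snd z < 2^q"
proof -
  have "K q (fst z) < 2^q" by (rule K_bound)
  then have "K q (fst z) + 1 \<le> 2^q" by linarith
  then have "real (K q (fst z)) + 1 \<le> 2^q" by (metis of_nat_1 of_nat_add of_nat_le_iff of_nat_numeral of_nat_power)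
  then show ?thesis using assms unfolding Mset_def by auto
qed

lemma birk_bound:
  fixes p :: "nat \<Rightarrow> nat" and a d :: "nat \<Rightarrow> real"
  assumes p_pos: "\<And>n. p n \<ge> 1"
    and p_gap: "\<And>n. p (Suc n) \<ge> p n + 2"
    and d_range: "\<And>n. 0 < d n \<and> d n < 1/2"
    and a_pos: "\<And>n. a n > 0"
    and a_summable: "summable a"
    and z: "z \<in> Mset"
  shows "\<bar>birk (ffun a d p) (2 powr (real (p n) - 2)) z\<bar> \<le> 8 * (a n * d n) + (\<Sum>m. a (m + Suc n))"
proof -
  define t where "t = 2 powr (real (p n) - 2)"
  have t0: "t > 0" unfolding t_def by simp
  define c where "c m = real (K (p m) (fst z)) + snd z" for m
  define F where "F m s = indicator {0..t} s * gG (a m) (d m) (p m) (Pm (p m) (c m + s))" for m s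
  have Fb: "\<bar>F m s\<bar> \<le> indicator {0..t} s * a m" for m s
    unfolding F_def using gG_bound[of "a m"] a_pos[of m] by (auto simp: indicator_def)
  have Fi: "integrable lborel (F m)" for m
  proof -
    have "integrable lborel (\<lambda>s. indicator {0..t} s *\<^sub>R gG (a m) (d m) (p m) (Pm (p m) (c m + s)))"
      using bdd_set_integrable[OF psi_meas gG_bound] unfolding set_integrable_def .
    moreover have "F m = (\<lambda>s. indicator {0..t} s *\<^sub>R gG (a m) (d m) (p m) (Pm (p m) (c m + s)))"
      by (rule ext) (simp add: F_def)
    ultimately show ?thesis by simp
  qed
  have ind_int: "integrable lborel (\<lambda>s. indicator {0..t} s * b)" for b :: real
    using t0 by (intro integrable_mult_left) (simp)
  have ind_val: "(LINT s|lborel. indicator {0..t} s * b) = t * b" for b :: real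
    using t0 by (simp add: measure_def)
  have Fn: "(LINT s|lborel. norm (F m s)) \<le> t * a m" for m
  proof -
    have "(LINT s|lborel. norm (F m s)) \<le> (LINT s|lborel. indicator {0..t} s * a m)"
      by (rule integral_mono) (use Fi ind_int Fb in auto)
    then show ?thesis using ind_val[of "a m"] t0 by linarith
  qed
  have Fabs: "\<bar>LINT s|lborel. F m s\<bar> \<le> t * a m" for m
  proof -
    have "\<bar>LINT s|lborel. F m s\<bar> \<le> (LINT s|lborel. indicator {0..t} s * a m)"
      by (rule integral_abs_bound_integral[OF Fi ind_int]) (use Fb in auto)
    then show ?thesis using ind_val[of "a m"] t0 by linarith
  qed
  have sF: "summable (\<lambda>m. norm (F m s))" for s
    by (rule summable_comparison_test[OF _ summable_mult[OF a_summable, of "indicator {0..t} s"]])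
       (use Fb in auto)
  have AEs: "AE s in lborel. summable (\<lambda>m. norm (F m s))"
    using sF by simp
  have sumn: "summable (\<lambda>m. LINT s|lborel. norm (F m s))"
    by (rule summable_comparison_test[OF _ summable_mult[OF a_summable, of t]]) (use Fn in auto)
  define I where "I m = (LINT s|lborel. F m s)" for m
  have sumI: "(LINT s|lborel. (\<Sum>m. F m s)) = (\<Sum>m. I m)"
    unfolding I_def by (rule integral_suminf[OF Fi AEs sumn])
  have summI: "summable I"
    unfolding I_def by (rule summable_integral[OF Fi AEs sumn])
  have LB: "(LBINT s=0..t. ffun a d p (flow s z)) = (LINT s|lborel. (\<Sum>m. F m s))"
  proof -
    have "(LBINT s=0..t. ffun a d p (flow s z)) = (LBINT s:{0..t}. ffun a d p (flow s z))"
      using interval_integral_Icc[of 0 t "\<lambda>s. ffun a d p (flow s z)"] t0 by (simp add: zero_ereal_def)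
    also have "\<dots> = (LINT s|lborel. indicator {0..t} s * ffun a d p (flow s z))"
      unfolding set_lebesgue_integral_def by simp
    also have "\<dots> = (LINT s|lborel. (\<Sum>m. F m s))"
    proof (rule Bochner_Integration.integral_cong[OF refl])
      fix s :: real
      show "indicator {0..t} s * ffun a d p (flow s z) = (\<Sum>m. F m s)"
      proof (cases "s \<in> {0..t}")
        case False then show ?thesis by (simp add: F_def)
      next
        case True
        then have s0: "0 \<le> s" by simp
        have fr: "flow s z \<in> Mset" using flow_rep[OF z s0] by blast
        have "ffun a d p (flow s z) = (\<Sum>m. gG (a m) (d m) (p m) (real (K (p m) (fst (flow s z))) + snd (flow s z)))"
          using ffun_eq[OF fr] .
        also have "\<dots> = (\<Sum>m. gG (a m) (d m) (p m) (Pm (p m) (c m + s)))"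
          using flow_rep[OF z s0] by (simp add: c_def add.assoc)
        finally show ?thesis using True by (simp add: F_def)
      qed
    qed
    finally show ?thesis .
  qed
  have Ilow: "I m = 0" if "m < n" for m
  proof -
    have pm: "p m + 2 \<le> p n" using p_mono[of p, OF p_gap that] by simp
    define k :: nat where "k = 2 ^ (p n - 2 - p m)"
    have "2 * 2 powr (real (p m) - 1) * real k = t"
    proof -
      have "2 * 2 powr (real (p m) - 1) = (2::real) ^ p m" using p_pos[of m]
        by (simp add: powr_realpow[symmetric] powr_diff)
      moreover have "t = (2::real) ^ (p n - 2)" unfolding t_def using pm
        by (simp add: powr_realpow[symmetric] powr_diff of_nat_diff)
      moreover have "(2::real) ^ p m * real k = 2 ^ (p n - 2)" unfolding k_def using pm
        by (simp add: power_add[symmetric])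
      ultimately show ?thesis by simp
    qed
    moreover have "I m = integral {0..t} (\<lambda>s. gG (a m) (d m) (p m) (Pm (p m) (c m + s)))"
    proof -
      have "I m = (LINT s:{0..t}|lborel. gG (a m) (d m) (p m) (Pm (p m) (c m + s)))"
        unfolding I_def F_def set_lebesgue_integral_def by simp
      also have "\<dots> = integral {0..t} (\<lambda>s. gG (a m) (d m) (p m) (Pm (p m) (c m + s)))"
        by (rule set_borel_integral_eq_integral(2)[OF bdd_set_integrable[OF psi_meas gG_bound]])
      finally show ?thesis .
    qed
    ultimately show ?thesis
      using AZk[where q="p m" and dd="d m" and aa="a m" and k=k and c="c m"] p_pos[of m] d_range[of m] by simp
  qed
  have In: "\<bar>I n\<bar> \<le> 4 * (a n) * (d n * 2 powr (real (p n) - 1))"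
    unfolding I_def F_def t_def
    by (rule Bn) (use p_pos[of n] d_range[of n] a_pos[of n] c_range[OF z] in \<open>auto simp: c_def\<close>)
  have split: "(\<Sum>m. I m) = (\<Sum>j. I (j + Suc n)) + (\<Sum>m<Suc n. I m)"
    by (rule suminf_split_initial_segment[OF summI])
  have head: "(\<Sum>m<Suc n. I m) = I n"
    using Ilow by simp
  have sa: "summable (\<lambda>j. t * a (j + Suc n))"
    by (rule summable_mult, rule summable_ignore_initial_segment[OF a_summable])
  have tailb: "\<bar>\<Sum>j. I (j + Suc n)\<bar> \<le> t * (\<Sum>j. a (j + Suc n))"
  proof -
    have sn: "summable (\<lambda>j. norm (I (j + Suc n)))"
      by (rule summable_comparison_test[OF _ sa]) (use Fabs in \<open>auto simp: I_def\<close>)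
    have "\<bar>\<Sum>j. I (j + Suc n)\<bar> \<le> (\<Sum>j. norm (I (j + Suc n)))"
      using summable_norm[OF sn] by simp
    also have "\<dots> \<le> (\<Sum>j. t * a (j + Suc n))"
      by (rule suminf_le) (use Fabs sn sa in \<open>auto simp: I_def\<close>)
    also have "\<dots> = t * (\<Sum>j. a (j + Suc n))"
      by (rule suminf_mult[OF summable_ignore_initial_segment[OF a_summable]])
    finally show ?thesis .
  qed
  have tot: "\<bar>\<Sum>m. I m\<bar> \<le> 4 * (a n) * (d n * 2 powr (real (p n) - 1)) + t * (\<Sum>j. a (j + Suc n))"
    using split head In tailb by linarith
  have ratio: "2 powr (real (p n) - 1) = 2 * t" unfolding t_def
    by (simp add: powr_diff)
  have "birk (ffun a d p) t z = (1 / t) * (\<Sum>m. I m)"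
    unfolding birk_def LB sumI ..
  then have "\<bar>birk (ffun a d p) t z\<bar> = (1/t) * \<bar>\<Sum>m. I m\<bar>" using t0 by (simp add: abs_mult)
  also have "\<dots> \<le> (1/t) * (4 * (a n) * (d n * 2 powr (real (p n) - 1)) + t * (\<Sum>j. a (j + Suc n)))"
    using tot t0 by (intro mult_left_mono) auto
  also have "\<dots> = 8 * (a n * d n) + (\<Sum>m. a (m + Suc n))"
    unfolding ratio using t0 by (simp add: field_simps)
  finally show ?thesis unfolding t_def .
qed

theorem theorem2:
  fixes p :: "nat \<Rightarrow> nat" and a d :: "nat \<Rightarrow> real"
  assumes p_pos: "\<And>n. p n \<ge> 1"
    and p_gap: "\<And>n. p (Suc n) \<ge> p n + 2"
    and d_range: "\<And>n. 0 < d n \<and> d n < 1/2"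
    and a_pos: "\<And>n. a n > 0"
    and a_summable: "summable a"
    and tail: "(\<lambda>n. \<Sum>m. a (m + Suc n)) \<in> o(\<lambda>n. a n * d n)"
    and cond: "\<And>n m. m > n \<Longrightarrow> 2 powr (real (p n) - 2) < d m * 2 powr (real (p m) - 1)"
  shows "integrable (lebesgue_on Mset) (ffun a d p)
         \<and> integral\<^sup>L (lebesgue_on Mset) (ffun a d p) = 0
         \<and> (\<exists>C. \<forall>\<^sub>F n in sequentially. \<forall>z\<in>Mset.
               \<bar>birk (ffun a d p) (2 powr (real (p n) - 2)) z\<bar> \<le> C * (a n * d n))"
proof -
  have A: "integrable (lebesgue_on Mset) (ffun a d p) \<and> integral\<^sup>L (lebesgue_on Mset) (ffun a d p) = 0"
    by (rule ffun_integral) (use p_pos d_range a_pos a_summable in auto)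
  have ev: "\<forall>\<^sub>F n in sequentially. norm (\<Sum>m. a (m + Suc n)) \<le> 1 * norm (a n * d n)"
    by (rule landau_o.smallD[OF tail]) simp
  have B: "\<forall>\<^sub>F n in sequentially. \<forall>z\<in>Mset.
               \<bar>birk (ffun a d p) (2 powr (real (p n) - 2)) z\<bar> \<le> 9 * (a n * d n)"
  proof (rule eventually_mono[OF ev], intro ballI)
    fix n z
    assume h: "norm (\<Sum>m. a (m + Suc n)) \<le> 1 * norm (a n * d n)" and z: "z \<in> Mset"
    have pos: "a n * d n > 0" using a_pos[of n] d_range[of n] by simp
    have "\<bar>birk (ffun a d p) (2 powr (real (p n) - 2)) z\<bar> \<le> 8 * (a n * d n) + (\<Sum>m. a (m + Suc n))"
      by (rule birk_bound[of p d a z n, OF p_pos p_gap d_range a_pos a_summable z])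
    also have "\<dots> \<le> 9 * (a n * d n)" using h pos by simp
    finally show "\<bar>birk (ffun a d p) (2 powr (real (p n) - 2)) z\<bar> \<le> 9 * (a n * d n)" .
  qed
  show ?thesis using A B by blast
qed

end
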